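(* Let $0\le k\le\infty$, let $M$ be a $C^k$ manifold, $\mathbb F\in\{\mathbb R,\mathbb C\}$, and let $\mathcal B$ be a family of functions closed under pointwise multiplication with $C^k_c(M,\mathbb F)\subset\mathcal B\subset C^k(M,\mathbb F)$. Let $T:\mathcal B\to\mathcal B$ be a bijection with $T(fg)=Tf\cdot Tg$ for all $f,g\in\mathcal B$, which restricts to a bijection of $C^k_c(M,\mathbb F)$ onto itself. Then there exists a homeomorphism $u:M\to M$ such that $u(Z(f))=Z(Tf)$ for all $f\in\mathcal B$.
   Context: Manifolds are Hausdorff and second countable. $Z(f)=\{x\in M:f(x)=0\}$; $C^k_c$ denotes compactly supported $C^k$ functions. *)

theory Defs
  imports "HOL-Analysis.Analysis" "HOL-Library.Extended_Nat"
begin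

text \<open>C^0 = continuous; C^(n+1) = Frechet differentiable at each point of U with derivative
  g' x such that for every direction v the map x \<mapsto> g' x v is C^n on U.
  (In finite dimensions this is the usual notion of C^(n+1).)\<close>
fun Cn_on :: "nat \<Rightarrow> ('e::euclidean_space \<Rightarrow> 'f::real_normed_vector) \<Rightarrow> 'e set \<Rightarrow> bool" where
  "Cn_on 0 g U = continuous_on U g"
| "Cn_on (Suc n) g U =
     (\<exists>g'. (\<forall>x\<in>U. (g has_derivative g' x) (at x)) \<and> (\<forall>v. Cn_on n (\<lambda>x. g' x v) U))"

definition Ck_on :: "enat \<Rightarrow> ('e::euclidean_space \<Rightarrow> 'f::real_normed_vector) \<Rightarrow> 'e set \<Rightarrow> bool" where
  "Ck_on k g U \<longleftrightarrow> (\<forall>n. enat n \<le> k \<longrightarrow> Cn_on n g U)"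

definition Ck_atlas :: "enat \<Rightarrow> ('a::topological_space set \<times> ('a \<Rightarrow> 'e::euclidean_space)) set \<Rightarrow> bool" where
  "Ck_atlas k A \<longleftrightarrow>
     \<Union>(fst ` A) = UNIV \<and>
     (\<forall>(U, \<phi>)\<in>A. open U \<and> open (\<phi> ` U) \<and> homeomorphism U (\<phi> ` U) \<phi> (inv_into U \<phi>)) \<and>
     (\<forall>(U, \<phi>)\<in>A. \<forall>(V, \<psi>)\<in>A. Ck_on k (\<psi> \<circ> inv_into U \<phi>) (\<phi> ` (U \<inter> V)))"

definition Ck_fun :: "enat \<Rightarrow> ('a::topological_space set \<times> ('a \<Rightarrow> 'e::euclidean_space)) set \<Rightarrow> ('a \<Rightarrow> 'f::real_normed_vector) \<Rightarrow> bool" where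
  "Ck_fun k A f \<longleftrightarrow> (\<forall>(U, \<phi>)\<in>A. Ck_on k (f \<circ> inv_into U \<phi>) (\<phi> ` U))"

definition Ckc_fun :: "enat \<Rightarrow> ('a::topological_space set \<times> ('a \<Rightarrow> 'e::euclidean_space)) set \<Rightarrow> ('a \<Rightarrow> 'f::real_normed_vector) \<Rightarrow> bool" where
  "Ckc_fun k A f \<longleftrightarrow> Ck_fun k A f \<and> compact (closure {x. f x \<noteq> 0})"

definition zero_set :: "('a \<Rightarrow> 'f::zero) \<Rightarrow> 'a set" where
  "zero_set f = {x. f x = 0}"

end

theory Submission
  imports Defs "HOL-Computational_Algebra.Polynomial"
begin


lemma Cn_mono: "Cn_on (Suc n) g U \<Longrightarrow> Cn_on n g U"
proof (induction n arbitrary: g)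
  case 0
  then obtain g' where "\<forall>x\<in>U. (g has_derivative g' x) (at x)" by auto
  then show ?case
    by (auto intro!: continuous_at_imp_continuous_on has_derivative_continuous)
next
  case (Suc n)
  then obtain g' where "\<forall>x\<in>U. (g has_derivative g' x) (at x)" "\<forall>v. Cn_on (Suc n) (\<lambda>x. g' x v) U"
    by auto
  with Suc.IH show ?case by auto
qed

lemma Cn_mono_le: "m \<le> n \<Longrightarrow> Cn_on n g U \<Longrightarrow> Cn_on m g U"
proof (induction n)
  case 0 then show ?case by simp
next
  case (Suc n)
  show ?case
  proof (cases "m = Suc n")
    case False
    then have "m \<le> n" using Suc.prems by simp
    then show ?thesis using Suc.IH Cn_mono Suc.prems(2) by blast
  qed (use Suc.prems in simp)
qed

lemma Cn_const: "Cn_on n (\<lambda>x. c) U"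
proof (induction n arbitrary: c)
  case 0 then show ?case by simp
next
  case (Suc n)
  show ?case by (auto intro!: exI[of _ "\<lambda>x h. 0"] Suc)
qed

lemma Cn_linear_comp: "bounded_linear L \<Longrightarrow> Cn_on n g U \<Longrightarrow> Cn_on n (\<lambda>x. L (g x)) U"
proof (induction n arbitrary: g)
  case 0 
  have "continuous_on UNIV L" using 0 by (simp add: linear_continuous_on)
  moreover have "continuous_on U g" using 0 by simp
  ultimately show ?case using continuous_on_compose2[of UNIV L U g] by simp
next
  case (Suc n)
  then obtain g' where g: "\<forall>x\<in>U. (g has_derivative g' x) (at x)" "\<forall>v. Cn_on n (\<lambda>x. g' x v) U"
    by auto
  have "\<forall>x\<in>U. ((\<lambda>x. L (g x)) has_derivative (\<lambda>h. L (g' x h))) (at x)"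
    using g(1) bounded_linear.has_derivative[OF Suc.prems(1)] by blast
  moreover have "\<forall>v. Cn_on n (\<lambda>x. L (g' x v)) U" using g(2) Suc.IH Suc.prems(1) by blast
  ultimately show ?case unfolding Cn_on.simps by (intro exI[where x="\<lambda>x h. L (g' x h)"]) blast
qed

lemma Cn_linear: "bounded_linear L \<Longrightarrow> Cn_on n L U"
proof (induction n)
  case 0 then show ?case by (simp add: linear_continuous_on)
next
  case (Suc n)
  have "\<forall>x\<in>U. (L has_derivative (\<lambda>h. L h)) (at x)"
    using Suc.prems bounded_linear_imp_has_derivative by blast
  moreover have "\<forall>v. Cn_on n (\<lambda>x. L v) U" using Cn_const by blast
  ultimately show ?case unfolding Cn_on.simps by (intro exI[where x="\<lambda>x h. L h"]) blast
qed

lemma Cn_ident: "Cn_on n (\<lambda>x. x) U"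
  by (rule Cn_linear) (rule bounded_linear_ident)

lemma Cn_add: "Cn_on n f U \<Longrightarrow> Cn_on n g U \<Longrightarrow> Cn_on n (\<lambda>x. f x + g x) U"
proof (induction n arbitrary: f g)
  case 0 then show ?case by (auto intro: continuous_on_add)
next
  case (Suc n)
  from Suc.prems obtain f' where "\<forall>x\<in>U. (f has_derivative f' x) (at x)" "\<forall>v. Cn_on n (\<lambda>x. f' x v) U"
    by auto
  moreover from Suc.prems obtain g' where "\<forall>x\<in>U. (g has_derivative g' x) (at x)" "\<forall>v. Cn_on n (\<lambda>x. g' x v) U"
    by auto
  ultimately show ?case
    by (auto intro!: exI[of _ "\<lambda>x h. f' x h + g' x h"] Suc.IH has_derivative_add)
qed

lemma Cn_sum: fixes f :: "'i \<Rightarrow> 'e::euclidean_space \<Rightarrow> 'f::real_normed_vector"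
  shows "finite I \<Longrightarrow> (\<And>i. i \<in> I \<Longrightarrow> Cn_on n (f i) U) \<Longrightarrow> Cn_on n (\<lambda>x. \<Sum>i\<in>I. f i x) U"
  by (induction I rule: finite_induct) (auto intro: Cn_add Cn_const)

lemma Cn_bilinear:
  assumes "bounded_bilinear pr"
  shows "Cn_on n a U \<Longrightarrow> Cn_on n b U \<Longrightarrow> Cn_on n (\<lambda>x. pr (a x) (b x)) U"
proof (induction n arbitrary: a b)
  case 0 then show ?case
    using bounded_bilinear.continuous_on[OF assms] by auto
next
  case (Suc n)
  from Suc.prems obtain a' where a: "\<forall>x\<in>U. (a has_derivative a' x) (at x)" "\<forall>v. Cn_on n (\<lambda>x. a' x v) U"
    by auto
  moreover from Suc.prems obtain b' where b: "\<forall>x\<in>U. (b has_derivative b' x) (at x)" "\<forall>v. Cn_on n (\<lambda>x. b' x v) U"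
    by auto
  have an: "Cn_on n a U" "Cn_on n b U" using Suc.prems Cn_mono by blast+
  show ?case
    apply simp
    apply (rule exI[of _ "\<lambda>x h. pr (a x) (b' x h) + pr (a' x h) (b x)"])
    using a b an
    by (auto intro!: Cn_add Suc.IH bounded_bilinear.FDERIV[OF assms])
qed

lemma Cn_mult: "Cn_on n a U \<Longrightarrow> Cn_on n b U \<Longrightarrow> Cn_on n (\<lambda>x. a x * b x :: 'f::real_normed_algebra) U"
  by (rule Cn_bilinear[OF bounded_bilinear_mult])

lemma Cn_chain:
  fixes h :: "'e::euclidean_space \<Rightarrow> 'e2::euclidean_space" and g :: "'e2 \<Rightarrow> 'f::real_normed_vector"
  shows "Cn_on n g V \<Longrightarrow> Cn_on n h U \<Longrightarrow> h ` U \<subseteq> V \<Longrightarrow> Cn_on n (\<lambda>x. g (h x)) U"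
proof (induction n arbitrary: g)
  case 0 then show ?case by (auto intro: continuous_on_compose2)
next
  case (Suc n)
  from Suc.prems obtain g' where g: "\<forall>y\<in>V. (g has_derivative g' y) (at y)" "\<forall>v. Cn_on n (\<lambda>y. g' y v) V"
    by auto
  from Suc.prems obtain h' where h: "\<forall>x\<in>U. (h has_derivative h' x) (at x)" "\<forall>v. Cn_on n (\<lambda>x. h' x v) U"
    by auto
  have hn: "Cn_on n h U" using Suc.prems Cn_mono by blast+
  have eq: "g' (h x) (h' x v) = (\<Sum>i\<in>Basis. (h' x v \<bullet> i) *\<^sub>R g' (h x) i)" if "x \<in> U" for x v
  proof -
    have lin: "linear (g' (h x))" using g(1) Suc.prems(3) that by (auto intro: has_derivative_linear)
    have "g' (h x) (h' x v) = g' (h x) (\<Sum>i\<in>Basis. (h' x v \<bullet> i) *\<^sub>R i)"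
      by (simp add: euclidean_representation)
    also have "\<dots> = (\<Sum>i\<in>Basis. (h' x v \<bullet> i) *\<^sub>R g' (h x) i)"
      using lin by (simp add: linear_sum linear_scale)
    finally show ?thesis .
  qed
  have "Cn_on n (\<lambda>x. \<Sum>i\<in>Basis. (h' x v \<bullet> i) *\<^sub>R g' (h x) i) U" for v
    apply (rule Cn_sum, simp)
    apply (rule Cn_bilinear[OF bounded_bilinear_scaleR])
     apply (rule Cn_linear_comp[OF bounded_linear_inner_left])
    using h apply simp
    apply (rule Suc.IH)
    using g hn Suc.prems by auto
  moreover have "((\<lambda>x. g (h x)) has_derivative (\<lambda>v. \<Sum>i\<in>Basis. (h' x v \<bullet> i) *\<^sub>R g' (h x) i)) (at x)"
    if "x \<in> U" for x
  proof -
    have "((\<lambda>x. g (h x)) has_derivative (\<lambda>v. g' (h x) (h' x v))) (at x)"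
      using has_derivative_compose[of h "h' x" x UNIV g "g' (h x)"] g(1) h(1) Suc.prems(3) that by auto
    moreover have "(\<lambda>v. g' (h x) (h' x v)) = (\<lambda>v. \<Sum>i\<in>Basis. (h' x v \<bullet> i) *\<^sub>R g' (h x) i)"
      using eq that by auto
    ultimately show ?thesis by simp
  qed
  ultimately show ?case unfolding Cn_on.simps
    by (intro exI[where x="\<lambda>x v. \<Sum>i\<in>Basis. (h' x v \<bullet> i) *\<^sub>R g' (h x) i"]) blast
qed


lemma Cn_subset: "V \<subseteq> U \<Longrightarrow> Cn_on n f U \<Longrightarrow> Cn_on n f V"
proof (induction n arbitrary: f)
  case 0 then show ?case by (auto intro: continuous_on_subset)
next
  case (Suc n)
  then obtain f' where f: "\<forall>x\<in>U. (f has_derivative f' x) (at x)" "\<forall>v. Cn_on n (\<lambda>x. f' x v) U"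
    by auto
  then show ?case using Suc.prems(1) Suc.IH unfolding Cn_on.simps
    by (intro exI[where x=f']) blast
qed

lemma Cn_cong: "open U \<Longrightarrow> (\<And>x. x \<in> U \<Longrightarrow> f x = g x) \<Longrightarrow> Cn_on n f U \<Longrightarrow> Cn_on n g U"
proof (induction n arbitrary: f g)
  case 0 then show ?case using continuous_on_cong by force
next
  case (Suc n)
  then obtain f' where f: "\<forall>x\<in>U. (f has_derivative f' x) (at x)" "\<forall>v. Cn_on n (\<lambda>x. f' x v) U"
    by auto
  have "\<forall>x\<in>U. (g has_derivative f' x) (at x)"
    using f(1) has_derivative_transform_within_open[of f _ _ UNIV U g] Suc.prems(1,2) by blast
  then show ?case using f(2) unfolding Cn_on.simps
    by (intro exI[where x=f']) blast
qed

lemma Cn_local: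
  "open U \<Longrightarrow> (\<And>x. x \<in> U \<Longrightarrow> \<exists>V. open V \<and> x \<in> V \<and> V \<subseteq> U \<and> Cn_on n f V) \<Longrightarrow> Cn_on n f U"
proof (induction n arbitrary: f)
  case 0
  have "isCont f x" if xU: "x \<in> U" for x
  proof -
    obtain V where "open V" "x \<in> V" "continuous_on V f" using 0(2)[OF xU] by auto
    then show ?thesis using continuous_on_eq_continuous_at[OF \<open>open V\<close>] by blast
  qed
  then show ?case by (simp add: continuous_at_imp_continuous_on)
next
  case (Suc n)
  define D where "D x = frechet_derivative f (at x)" for x
  have loc: "\<exists>V f'. open V \<and> x \<in> V \<and> V \<subseteq> U \<and> (\<forall>y\<in>V. (f has_derivative f' y) (at y))
     \<and> (\<forall>v. Cn_on n (\<lambda>y. f' y v) V)" if xU: "x \<in> U" for x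
  proof -
    obtain V where V: "open V" "x\<in>V" "V\<subseteq>U" "Cn_on (Suc n) f V" using Suc.prems(2)[OF xU] by blast
    from V(4) obtain f' where "\<forall>y\<in>V. (f has_derivative f' y) (at y)" "\<forall>v. Cn_on n (\<lambda>y. f' y v) V"
      unfolding Cn_on.simps by blast
    with V show ?thesis by blast
  qed
  have D: "(f has_derivative D y) (at y)" if yU: "y \<in> U" for y
  proof -
    obtain V f' where "y \<in> V" "\<forall>y\<in>V. (f has_derivative f' y) (at y)" using loc[OF yU] by blast
    then have "f differentiable (at y)" unfolding differentiable_def by blast
    then show ?thesis unfolding D_def frechet_derivative_works .
  qed
  have "Cn_on n (\<lambda>y. D y v) U" for v
  proof (rule Suc.IH[OF Suc.prems(1)])
    fix x assume "x \<in> U"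
    then obtain V f' where V: "open V" "x \<in> V" "V \<subseteq> U" "\<forall>y\<in>V. (f has_derivative f' y) (at y)"
       "\<forall>v. Cn_on n (\<lambda>y. f' y v) V" using loc[OF \<open>x \<in> U\<close>] by blast
    have "\<And>y. y \<in> V \<Longrightarrow> f' y v = D y v"
    proof -
      fix y assume "y \<in> V"
      then have "y \<in> U" using V(3) by blast
      have "f' y = D y" by (rule has_derivative_unique[OF V(4)[rule_format, OF \<open>y \<in> V\<close>] D[OF \<open>y \<in> U\<close>]])
      then show "f' y v = D y v" by simp
    qed
    moreover have "Cn_on n (\<lambda>y. f' y v) V" using V(5) by blast
    ultimately have "Cn_on n (\<lambda>y. D y v) V"
      using Cn_cong[OF V(1), of "\<lambda>y. f' y v" "\<lambda>y. D y v" n] by blast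
    then show "\<exists>V. open V \<and> x \<in> V \<and> V \<subseteq> U \<and> Cn_on n (\<lambda>y. D y v) V"
      using V(1,2,3) by blast
  qed
  then show ?case using D unfolding Cn_on.simps
    by (intro exI[where x=D] conjI ballI allI) auto
qed

lemma Cn_inverse: "Cn_on n (inverse :: 'f::{real_normed_div_algebra,euclidean_space} \<Rightarrow> 'f) (-{0})"
proof (induction n)
  case 0 then show ?case by (auto intro!: continuous_on_inverse continuous_on_id)
next
  case (Suc n)
  have "\<forall>x\<in>-{0}. (inverse has_derivative (\<lambda>h. - (inverse x * h * inverse (x::'f)))) (at x)"
    using has_derivative_inverse' by blast
  moreover have "Cn_on n (\<lambda>x. - (inverse x * v * inverse (x::'f))) (-{0})" for v
    by (intro Cn_linear_comp[OF bounded_linear_minus[OF bounded_linear_ident]] Cn_mult Suc Cn_const)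
  ultimately show ?case unfolding Cn_on.simps
    by (intro exI[where x="\<lambda>x h. - (inverse x * h * inverse (x::'f))"]) blast
qed

lemma Cn_inverse_comp:
  fixes f :: "'e::euclidean_space \<Rightarrow> 'f::{real_normed_div_algebra,euclidean_space}"
  shows "Cn_on n f U \<Longrightarrow> (\<And>x. x \<in> U \<Longrightarrow> f x \<noteq> 0) \<Longrightarrow> Cn_on n (\<lambda>x. inverse (f x)) U"
  by (rule Cn_chain[OF Cn_inverse]) auto




definition Fp :: "real poly \<Rightarrow> real \<Rightarrow> real" where
  "Fp p t = (if 0 < t then poly p (inverse t) * exp (- inverse t) else 0)"

definition Qp :: "real poly \<Rightarrow> real poly" where
  "Qp p = [:0,0,1:] * (p - pderiv p)"

lemma poly_exp_lim: "((\<lambda>s::real. poly r s * exp (- s)) \<longlongrightarrow> 0) at_top"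
proof -
  have "((\<lambda>s::real. \<Sum>i\<le>degree r. coeff r i * (s ^ i / exp s)) \<longlongrightarrow> (\<Sum>i\<le>degree r. coeff r i * 0)) at_top"
    by (intro tendsto_sum tendsto_mult tendsto_const tendsto_power_div_exp_0)
  moreover have "poly r s * exp (- s) = (\<Sum>i\<le>degree r. coeff r i * (s ^ i / exp s))" for s
    by (simp add: poly_altdef sum_distrib_right exp_minus divide_inverse mult.assoc)
  ultimately show ?thesis by simp
qed

lemma Fp_deriv: "(Fp p has_real_derivative Fp (Qp p) t) (at t)"
proof (cases "0 < t")
  case True
  have "((\<lambda>t. poly p (inverse t) * exp (- inverse t)) has_real_derivative
     poly (pderiv p) (inverse t) * (- (inverse t * inverse t)) * exp (- inverse t) +
     poly p (inverse t) * (exp (- inverse t) * (inverse t * inverse t))) (at t)"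
    using True
    by (auto intro!: derivative_eq_intros DERIV_chain2[OF poly_DERIV] simp: power2_eq_square)
  moreover have "poly (pderiv p) (inverse t) * (- (inverse t * inverse t)) * exp (- inverse t) +
     poly p (inverse t) * (exp (- inverse t) * (inverse t * inverse t)) = Fp (Qp p) t"
    using True by (simp add: Fp_def Qp_def algebra_simps)
  ultimately have "((\<lambda>t. poly p (inverse t) * exp (- inverse t)) has_real_derivative Fp (Qp p) t) (at t)"
    by simp
  then show ?thesis
    by (rule has_field_derivative_transform_within_open[where S="{0<..}"]) (use True in \<open>auto simp: Fp_def\<close>)
next
  case False
  show ?thesis
  proof (cases "t < 0")
    case True
    have "((\<lambda>_. 0) has_real_derivative Fp (Qp p) t) (at t)" using True by (simp add: Fp_def)
    then show ?thesis
      by (rule has_field_derivative_transform_within_open[where S="{..<0}"]) (use True in \<open>auto simp: Fp_def\<close>)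
  next
    case False
    with \<open>\<not> 0 < t\<close> have t0: "t = 0" by simp
    have "((\<lambda>y. Fp p y / y) \<longlongrightarrow> 0) (at_left 0)"
    proof (rule tendsto_eventually)
      show "\<forall>\<^sub>F y in at_left 0. Fp p y / y = 0"
        unfolding eventually_at_left_field by (auto simp: Fp_def intro!: exI[of _ "-1"])
    qed
    moreover have "((\<lambda>y. Fp p y / y) \<longlongrightarrow> 0) (at_right 0)"
    proof -
      have "((\<lambda>s. poly (p * [:0,1:]) s * exp (- s)) \<longlongrightarrow> 0) at_top" by (rule poly_exp_lim)
      then have "((\<lambda>y. poly (p * [:0,1:]) (inverse y) * exp (- inverse y)) \<longlongrightarrow> 0) (at_right 0)"
        using filterlim_compose filterlim_inverse_at_top_right by blast
      moreover have "\<forall>\<^sub>F y in at_right 0. poly (p * [:0,1:]) (inverse y) * exp (- inverse y) = Fp p y / y"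
        unfolding eventually_at_right_field by (auto simp: Fp_def field_simps intro!: exI[of _ 1])
      ultimately show ?thesis using tendsto_cong by fastforce
    qed
    ultimately have "((\<lambda>y. Fp p y / y) \<longlongrightarrow> 0) (at 0)"
      by (simp add: filterlim_at_split)
    then show ?thesis unfolding t0 has_field_derivative_iff by (simp add: Fp_def)
  qed
qed

lemma Cn_Fp: "Cn_on n (Fp p) UNIV"
proof (induction n arbitrary: p)
  case 0
  have "isCont (Fp p) x" for x using Fp_deriv DERIV_isCont by blast
  then show ?case by (auto intro!: continuous_at_imp_continuous_on)
next
  case (Suc n)
  have "\<forall>t\<in>UNIV. (Fp p has_derivative (\<lambda>h. Fp (Qp p) t * h)) (at t)"
    using Fp_deriv unfolding has_field_derivative_def by blast
  moreover have "Cn_on n (\<lambda>t. Fp (Qp p) t * v) UNIV" for v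
    by (intro Cn_mult Suc Cn_const)
  ultimately show ?case unfolding Cn_on.simps
    by (intro exI[where x="\<lambda>t h. Fp (Qp p) t * h"] conjI ballI allI) auto
qed


lemma Fp1: "Fp 1 t = (if 0 < t then exp (- inverse t) else 0)"
  by (simp add: Fp_def)

definition stp :: "real \<Rightarrow> real" where
  "stp t = Fp 1 t * inverse (Fp 1 t + Fp 1 (1 - t))"

lemma Cn_stp: "Cn_on n stp UNIV"
proof -
  have h: "Cn_on n (\<lambda>t::real. 1 - t) UNIV"
    using Cn_add[OF Cn_const Cn_linear_comp[OF bounded_linear_minus[OF bounded_linear_ident] Cn_ident],
        of n "1::real" UNIV] by simp
  have d: "Cn_on n (\<lambda>t. Fp 1 t + Fp 1 (1 - t)) UNIV"
    by (intro Cn_add Cn_Fp Cn_chain[OF Cn_Fp h]) auto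
  have nz: "Fp 1 t + Fp 1 (1 - t) \<noteq> 0" for t
  proof -
    have "0 < Fp 1 t + Fp 1 (1 - t)"
      by (cases "0 < t") (auto simp: Fp1 add_pos_nonneg add_nonneg_pos)
    then show ?thesis by simp
  qed
  show ?thesis unfolding stp_def
    by (intro Cn_mult Cn_Fp Cn_inverse_comp d nz)
qed

lemma stp0: "t \<le> 0 \<Longrightarrow> stp t = 0"
  by (simp add: stp_def Fp1)

lemma stp1: "1 \<le> t \<Longrightarrow> stp t = 1"
  by (simp add: stp_def Fp1)

definition bump :: "'e::euclidean_space \<Rightarrow> real \<Rightarrow> real \<Rightarrow> 'e \<Rightarrow> 'f::real_normed_algebra_1" where
  "bump c a b y = of_real (stp ((b - (y - c) \<bullet> (y - c)) / (b - a)))"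

lemma Cn_bump: "Cn_on n (bump c a b) UNIV"
proof -
  have "Cn_on n (\<lambda>y. y + (- c)) UNIV" by (intro Cn_add Cn_ident Cn_const)
  then have y: "Cn_on n (\<lambda>y. y - c) UNIV" by simp
  have q: "Cn_on n (\<lambda>y. (y - c) \<bullet> (y - c)) UNIV"
    by (rule Cn_bilinear[OF bounded_bilinear_inner y y])
  have "Cn_on n (\<lambda>y. (b + - ((y - c) \<bullet> (y - c))) * inverse (b - a)) UNIV"
    by (intro Cn_mult Cn_add Cn_const Cn_linear_comp[OF bounded_linear_minus[OF bounded_linear_ident] q])
  then have h: "Cn_on n (\<lambda>y. (b - (y - c) \<bullet> (y - c)) / (b - a)) UNIV"
    by (simp add: divide_inverse)
  show ?thesis unfolding bump_def[abs_def]
    by (intro Cn_linear_comp[OF bounded_linear_of_real] Cn_chain[OF Cn_stp h]) auto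
qed

lemma bump1: "a < b \<Longrightarrow> (y - c) \<bullet> (y - c) \<le> a \<Longrightarrow> bump c a b y = 1"
  by (simp add: bump_def stp1)

lemma bump0: "a < b \<Longrightarrow> b \<le> (y - c) \<bullet> (y - c) \<Longrightarrow> bump c a b y = 0"
  by (simp add: bump_def stp0 divide_nonpos_pos)




abbreviation supp :: "('a::topological_space \<Rightarrow> 'f::real_normed_field) \<Rightarrow> 'a set" where
  "supp f \<equiv> closure {z. f z \<noteq> 0}"

lemma one_on_supp:
  fixes e h :: "'a::topological_space \<Rightarrow> 'f::real_normed_field"
  assumes "continuous_on UNIV e" "(\<lambda>z. e z * h z) = h" "z \<in> supp h"
  shows "e z = 1"
proof -
  have cl: "closed {z. e z = 1}"
    by (rule closed_Collect_eq[OF assms(1)]) simp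
  have "{z. h z \<noteq> 0} \<subseteq> {z. e z = 1}"
  proof
    fix w assume "w \<in> {z. h z \<noteq> 0}"
    moreover have "e w * h w = h w" using assms(2) by (metis (no_types))
    ultimately show "w \<in> {z. e z = 1}" by simp
  qed
  then have "supp h \<subseteq> {z. e z = 1}" using cl by (rule closure_minimal)
  then show ?thesis using assms(3) by blast
qed

locale absT =
  fixes B C :: "('a::t2_space \<Rightarrow> 'f::real_normed_field) set" and T
  assumes C_B: "C \<subseteq> B"
  and zeroC: "(\<lambda>_. 0) \<in> C"
  and Bmult: "\<And>f g. f\<in>B \<Longrightarrow> g\<in>B \<Longrightarrow> (\<lambda>x. f x * g x) \<in> B"
  and Cmult: "\<And>f g. f\<in>C \<Longrightarrow> g\<in>C \<Longrightarrow> (\<lambda>x. f x * g x) \<in> C"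
  and Ccpt: "\<And>f. f\<in>C \<Longrightarrow> compact (supp f)"
  and Bcont: "\<And>f. f\<in>B \<Longrightarrow> continuous_on UNIV f"
  and BL: "\<And>x W. open W \<Longrightarrow> x \<in> W \<Longrightarrow> \<exists>e\<in>C. \<exists>N. open N \<and> x \<in> N \<and> (\<forall>z\<in>N. e z = 1) \<and> supp e \<subseteq> W"
  and DIV: "\<And>f e. f\<in>B \<Longrightarrow> e\<in>C \<Longrightarrow> supp e \<subseteq> {z. f z \<noteq> 0} \<Longrightarrow> (\<lambda>z. e z * inverse (f z)) \<in> C"
  and Tbij: "bij_betw T B B"
  and Tmult: "\<And>f g. f\<in>B \<Longrightarrow> g\<in>B \<Longrightarrow> T (\<lambda>x. f x * g x) = (\<lambda>x. T f x * T g x)"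
  and TC: "bij_betw T C C"
begin

lemma Tinj: "f \<in> B \<Longrightarrow> g \<in> B \<Longrightarrow> T f = T g \<Longrightarrow> f = g"
  using Tbij by (metis bij_betw_def inj_onD)

lemma TB: "f \<in> B \<Longrightarrow> T f \<in> B"
  by (rule bij_betw_apply[OF Tbij])

lemma TCC: "f \<in> C \<Longrightarrow> T f \<in> C"
  by (rule bij_betw_apply[OF TC])

lemma Csurj: "g \<in> C \<Longrightarrow> \<exists>f\<in>C. T f = g"
  using TC by (metis bij_betw_def imageE)

lemma Bsurj: "g \<in> B \<Longrightarrow> \<exists>f\<in>B. T f = g"
  using Tbij by (metis bij_betw_def imageE)

lemma zeroB: "(\<lambda>_. 0) \<in> B" using zeroC C_B by blast

lemma T0: "T (\<lambda>_. 0) = (\<lambda>_. 0)"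
proof -
  obtain g where g: "g \<in> B" "T g = (\<lambda>_. 0)" using Bsurj[OF zeroB] by blast
  have "T (\<lambda>x. (\<lambda>_. 0) x * g x) = (\<lambda>x. T (\<lambda>_. 0) x * T g x)" by (rule Tmult[OF zeroB g(1)])
  then show ?thesis using g by simp
qed

lemma open_coz: "f \<in> B \<Longrightarrow> open {z. f z \<noteq> 0}"
  using open_Collect_neq[OF Bcont continuous_on_const] by blast

lemma coz_supp: "{z. f z \<noteq> 0} \<subseteq> supp f"
  by (rule closure_subset)

definition KK where "KK x = {y. \<forall>f\<in>C. f x \<noteq> 0 \<longrightarrow> y \<in> supp (T f)}"

lemma c0:
  assumes y: "y \<in> KK x" and f: "f \<in> B" and x: "x \<notin> supp f"
  shows "T f y = 0"
proof (rule ccontr)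
  assume ne: "T f y \<noteq> 0"
  obtain h N where h: "h \<in> C" "open N" "x \<in> N" "\<forall>z\<in>N. h z = 1" "supp h \<subseteq> - supp f"
    using BL[of "- supp f" x] x by auto
  have hB: "h \<in> B" using h(1) C_B by blast
  have "(\<lambda>z. h z * f z) = (\<lambda>_. 0)"
  proof
    fix z show "h z * f z = 0"
      using h(5) coz_supp[of h] coz_supp[of f] by auto
  qed
  then have "(\<lambda>z. T h z * T f z) = (\<lambda>_. 0)" using Tmult[OF hB f] T0 by simp
  then have disj: "{z. T f z \<noteq> 0} \<inter> {z. T h z \<noteq> 0} = {}" by (auto dest: fun_cong)
  have "y \<in> supp (T h)" using y h(1,3,4) unfolding KK_def by auto
  moreover have "open {z. T f z \<noteq> 0}" using open_coz TB f by blast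
  ultimately have "{z. T f z \<noteq> 0} \<inter> supp (T h) \<noteq> {}" using ne by blast
  then show False using disj open_Int_closure_eq_empty[OF \<open>open {z. T f z \<noteq> 0}\<close>] by blast
qed

lemma b0:
  assumes y: "y \<in> KK x" and f: "f \<in> B" and x: "f x \<noteq> 0"
  shows "T f y \<noteq> 0"
proof -
  obtain e N where e: "e \<in> C" "open N" "x \<in> N" "\<forall>z\<in>N. e z = 1" "supp e \<subseteq> {z. f z \<noteq> 0}"
    using BL[OF open_coz[OF f], of x] x by auto
  define g where "g = (\<lambda>z. e z * inverse (f z))"
  have gC: "g \<in> C" unfolding g_def by (rule DIV[OF f e(1) e(5)])
  have fg: "(\<lambda>z. f z * g z) = e"
  proof
    fix z show "f z * g z = e z"
    proof (cases "f z = 0")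
      case True
      then have "e z = 0" using e(5) coz_supp[of e] by blast
      then show ?thesis using True by (simp add: g_def)
    qed (simp add: g_def)
  qed
  obtain h N' where h: "h \<in> C" "open N'" "x \<in> N'" "\<forall>z\<in>N'. h z = 1" "supp h \<subseteq> N"
    using BL[OF e(2,3)] by auto
  have eh: "(\<lambda>z. e z * h z) = h"
  proof
    fix z show "e z * h z = h z"
      using h(5) e(4) coz_supp[of h] by (cases "h z = 0") auto
  qed
  have eB: "e \<in> B" "h \<in> B" "g \<in> B" using e(1) h(1) gC C_B by auto
  have "(\<lambda>z. T e z * T h z) = T h" using Tmult[OF eB(1,2)] eh by simp
  moreover have "y \<in> supp (T h)" using y h(1,3,4) unfolding KK_def by auto
  ultimately have "T e y = 1" using one_on_supp[OF Bcont[OF TB[OF eB(1)]]] by blast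
  moreover have "T e = (\<lambda>z. T f z * T g z)" using Tmult[OF f eB(3)] fg by simp
  ultimately show ?thesis by (metis mult_zero_left zero_neq_one)
qed

lemma KK_unique:
  assumes y: "y \<in> KK x" and y': "y' \<in> KK x"
  shows "y = y'"
proof (rule ccontr)
  assume "y \<noteq> y'"
  then obtain W W' where W: "open W" "open W'" "y \<in> W" "y' \<in> W'" "W \<inter> W' = {}"
    using hausdorff[OF \<open>y \<noteq> y'\<close>] by blast
  have mk: "\<exists>c b. c \<in> C \<and> b \<in> C \<and> b p = 1 \<and> (\<lambda>z. c z * b z) = b \<and> {z. c z \<noteq> 0} \<subseteq> V"
    if VV: "open V" "p \<in> V" for V p
  proof -
    obtain c N where c: "c \<in> C" "open N" "p \<in> N" "\<forall>z\<in>N. c z = 1" "supp c \<subseteq> V"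
      using BL[OF VV] by auto
    obtain b N' where b: "b \<in> C" "open N'" "p \<in> N'" "\<forall>z\<in>N'. b z = 1" "supp b \<subseteq> N"
      using BL[OF c(2,3)] by auto
    have "(\<lambda>z. c z * b z) = b"
    proof
      fix z show "c z * b z = b z"
        using b(5) c(4) coz_supp[of b] by (cases "b z = 0") auto
    qed
    moreover have "{z. c z \<noteq> 0} \<subseteq> V" using c(5) coz_supp[of c] by blast
    moreover have "b p = 1" using b(3,4) by blast
    ultimately show ?thesis using c(1) b(1) by blast
  qed
  obtain c b where cb: "c \<in> C" "b \<in> C" "b y = 1" "(\<lambda>z. c z * b z) = b" "{z. c z \<noteq> 0} \<subseteq> W"
    using mk[OF W(1,3)] by blast
  obtain c' b' where cb': "c' \<in> C" "b' \<in> C" "b' y' = 1" "(\<lambda>z. c' z * b' z) = b'" "{z. c' z \<noteq> 0} \<subseteq> W'"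
    using mk[OF W(2,4)] by blast
  have cc: "(\<lambda>z. c z * c' z) = (\<lambda>_. 0)"
  proof
    fix z show "c z * c' z = 0" using cb(5) cb'(5) W(5) by (cases "c z = 0") auto
  qed
  obtain g where g: "g \<in> C" "T g = c" using Csurj[OF cb(1)] by blast
  obtain f where f: "f \<in> C" "T f = b" using Csurj[OF cb(2)] by blast
  obtain g' where g': "g' \<in> C" "T g' = c'" using Csurj[OF cb'(1)] by blast
  obtain f' where f': "f' \<in> C" "T f' = b'" using Csurj[OF cb'(2)] by blast
  note gf = g(1) f(1) g(2) f(2) and gf' = g'(1) f'(1) g'(2) f'(2)
  have B: "g \<in> B" "f \<in> B" "g' \<in> B" "f' \<in> B" using gf gf' C_B by auto
  have gfeq: "(\<lambda>z. g z * f z) = f"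
    by (rule Tinj[OF Bmult[OF B(1,2)] B(2)]) (simp add: Tmult[OF B(1,2)] gf cb(4))
  have gfeq': "(\<lambda>z. g' z * f' z) = f'"
    by (rule Tinj[OF Bmult[OF B(3,4)] B(4)]) (simp add: Tmult[OF B(3,4)] gf' cb'(4))
  have gg: "(\<lambda>z. g z * g' z) = (\<lambda>_. 0)"
    by (rule Tinj[OF Bmult[OF B(1,3)] zeroB]) (simp add: Tmult[OF B(1,3)] gf gf' cc T0)
  have "x \<in> supp f" using c0[OF y B(2)] gf cb(3) by auto
  then have g1: "g x = 1" using one_on_supp[OF Bcont[OF B(1)] gfeq] by blast
  have "x \<in> supp f'" using c0[OF y' B(4)] gf' cb'(3) by auto
  then have g1': "g' x = 1" using one_on_supp[OF Bcont[OF B(3)] gfeq'] by blast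
  have "g x * g' x = 0" using gg by (metis (no_types))
  then show False using g1 g1' by simp
qed

lemma KK_ne: "KK x \<noteq> {}"
proof -
  obtain h0 N where h0: "h0 \<in> C" "open N" "x \<in> N" "\<forall>z\<in>N. h0 z = 1"
    using BL[of UNIV x] by auto
  define F where "F = {supp (T f) | f. f \<in> C \<and> f x \<noteq> 0}"
  have fin: "\<exists>g\<in>C. g x \<noteq> 0 \<and> supp (T g) \<subseteq> supp (T h0) \<inter> \<Inter>F'"
    if "finite F'" "F' \<subseteq> F" for F'
    using that
  proof (induction F' rule: finite_induct)
    case empty
    then show ?case using h0 by (intro bexI[of _ h0]) auto
  next
    case (insert A F')
    then obtain g where g: "g \<in> C" "g x \<noteq> 0" "supp (T g) \<subseteq> supp (T h0) \<inter> \<Inter>F'" by auto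
    obtain f where f: "f \<in> C" "f x \<noteq> 0" "A = supp (T f)" using insert.prems F_def by auto
    have fB: "f \<in> B" "g \<in> B" using f g C_B by auto
    have "supp (T (\<lambda>z. f z * g z)) = supp (\<lambda>z. T f z * T g z)" using Tmult[OF fB] by simp
    also have "\<dots> \<subseteq> supp (T f) \<inter> supp (T g)"
      by (intro Int_greatest closure_mono) auto
    finally show ?case using g f Cmult[OF f(1) g(1)] by (intro bexI[of _ "\<lambda>z. f z * g z"]) auto
  qed
  have "supp (T h0) \<inter> \<Inter>F \<noteq> {}"
  proof (rule compact_imp_fip)
    show "compact (supp (T h0))" using Ccpt TCC h0(1) by blast
    show "closed A" if "A \<in> F" for A using that F_def by auto
    fix F' assume F': "finite F'" "F' \<subseteq> F"
    obtain g where g: "g \<in> C" "g x \<noteq> 0" "supp (T g) \<subseteq> supp (T h0) \<inter> \<Inter>F'" using fin[OF F'] by blast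
    have "T g \<noteq> (\<lambda>_. 0)"
    proof
      assume "T g = (\<lambda>_. 0)"
      then have "g = (\<lambda>_. 0)" using Tinj[of g "\<lambda>_. 0"] T0 g(1) C_B zeroB by auto
      then show False using g(2) by simp
    qed
    then obtain z where "T g z \<noteq> 0" by auto
    then have "z \<in> supp (T g)" using coz_supp by blast
    then show "supp (T h0) \<inter> \<Inter>F' \<noteq> {}" using g(3) by blast
  qed
  then obtain y where "y \<in> \<Inter>F" by blast
  then have "y \<in> KK x" unfolding KK_def F_def by blast
  then show ?thesis by blast
qed

definition uu where "uu x = (SOME y. y \<in> KK x)"

lemma uu_KK: "uu x \<in> KK x"
  unfolding uu_def using KK_ne by (simp add: some_in_eq)

lemma half:
  "(\<forall>x y. (\<forall>f\<in>C. f x \<noteq> 0 \<longrightarrow> y \<in> supp (T f)) \<longrightarrow> y = uu x) \<and>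
   (\<forall>x. \<forall>f\<in>B. f x \<noteq> 0 \<longrightarrow> T f (uu x) \<noteq> 0) \<and>
   (\<forall>x. \<forall>f\<in>B. x \<notin> supp f \<longrightarrow> T f (uu x) = 0)"
  using KK_unique uu_KK b0 c0 unfolding KK_def by blast

end


lemma absT_inv:
  assumes "absT B C T"
  shows "absT B C (inv_into B T)"
proof -
  interpret absT B C T by fact
  let ?S = "inv_into B T"
  have inj: "inj_on T B" using Tbij bij_betw_def by blast
  have SB: "g \<in> B \<Longrightarrow> ?S g \<in> B" for g by (rule bij_betw_apply[OF bij_betw_inv_into[OF Tbij]])
  have TS: "g \<in> B \<Longrightarrow> T (?S g) = g" for g using Tbij by (simp add: bij_betw_inv_into_right)
  have ST: "f \<in> B \<Longrightarrow> ?S (T f) = f" for f using inj by simp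
  show ?thesis
  proof (rule absT.intro[OF C_B zeroC Bmult Cmult Ccpt Bcont BL DIV])
    show "bij_betw ?S B B" by (rule bij_betw_inv_into[OF Tbij])
  next
    fix f g assume f: "f \<in> B" and g: "g \<in> B"
    have eq1: "T (\<lambda>x. ?S f x * ?S g x) = (\<lambda>x. f x * g x)"
      using Tmult[OF SB[OF f] SB[OF g]] TS f g by simp
    show "?S (\<lambda>x. f x * g x) = (\<lambda>x. ?S f x * ?S g x)"
      using ST[OF Bmult[OF SB[OF f] SB[OF g]]] unfolding eq1 .
  next
    have img: "?S ` C = C"
    proof
      show "?S ` C \<subseteq> C"
      proof
        fix h assume "h \<in> ?S ` C"
        then obtain g where g: "g \<in> C" "h = ?S g" by blast
        obtain f where f: "f \<in> C" "T f = g" using Csurj[OF g(1)] by blast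
        have "f \<in> B" using C_B f(1) by blast
        then have "?S (T f) = f" by (rule ST)
        then show "h \<in> C" using g(2) f by simp
      qed
      show "C \<subseteq> ?S ` C"
      proof
        fix f assume "f \<in> C"
        have "f \<in> B" using C_B \<open>f \<in> C\<close> by blast
        have "T f \<in> C" using TCC \<open>f \<in> C\<close> by blast
        moreover have "?S (T f) = f" by (rule ST[OF \<open>f \<in> B\<close>])
        ultimately show "f \<in> ?S ` C" by (simp add: rev_image_eqI)
      qed
    qed
    have "inj_on ?S B" using bij_betw_inv_into[OF Tbij] unfolding bij_betw_def by blast
    then have "inj_on ?S C" using C_B inj_on_subset by blast
    then show "bij_betw ?S C C" using img by (simp add: bij_betw_def)
  qed
qed

theorem abs_main:
  assumes "absT B C T"
  shows "\<exists>u v. homeomorphism UNIV UNIV u v \<and> (\<forall>f\<in>B. u ` zero_set f = zero_set (T f))"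
proof -
  interpret a: absT B C T by fact
  interpret b: absT B C "inv_into B T" by (rule absT_inv[OF assms])
  let ?S = "inv_into B T"
  define u where "u = a.uu"
  define v where "v = b.uu"
  note hu = a.half[folded u_def] and hv = b.half[folded v_def]
  have inj: "inj_on T B" using a.Tbij bij_betw_def by blast
  have SB: "g \<in> B \<Longrightarrow> ?S g \<in> B" for g by (rule bij_betw_apply[OF bij_betw_inv_into[OF a.Tbij]])
  have TS: "g \<in> B \<Longrightarrow> T (?S g) = g" for g using a.Tbij by (simp add: bij_betw_inv_into_right)
  have ST: "f \<in> B \<Longrightarrow> ?S (T f) = f" for f using inj by simp
  have vu: "v (u x) = x" for x
  proof -
    have "\<forall>g\<in>C. g (u x) \<noteq> 0 \<longrightarrow> x \<in> supp (?S g)"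
    proof (intro ballI impI)
      fix g assume g: "g \<in> C" "g (u x) \<noteq> 0"
      then have gB: "g \<in> B" using a.C_B by blast
      show "x \<in> supp (?S g)"
      proof (rule ccontr)
        assume "x \<notin> supp (?S g)"
        then have "T (?S g) (u x) = 0" using hu SB[OF gB] by blast
        then show False using TS[OF gB] g(2) by simp
      qed
    qed
    then show ?thesis using hv by metis
  qed
  have uv: "u (v y) = y" for y
  proof -
    have "\<forall>f\<in>C. f (v y) \<noteq> 0 \<longrightarrow> y \<in> supp (T f)"
    proof (intro ballI impI)
      fix f assume f: "f \<in> C" "f (v y) \<noteq> 0"
      then have fB: "f \<in> B" using a.C_B by blast
      show "y \<in> supp (T f)"
      proof (rule ccontr)
        assume "y \<notin> supp (T f)"
        then have "?S (T f) (v y) = 0" using hv a.TB[OF fB] by blast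
        then show False using ST[OF fB] f(2) by simp
      qed
    qed
    then show ?thesis using hu by metis
  qed
  have nz: "f \<in> B \<Longrightarrow> T f (u x) \<noteq> 0 \<longleftrightarrow> f x \<noteq> 0" for f x
  proof
    assume f: "f \<in> B" "T f (u x) \<noteq> 0"
    then have "?S (T f) (v (u x)) \<noteq> 0" using hv a.TB by blast
    then show "f x \<noteq> 0" using ST[OF f(1)] vu by simp
  next
    assume "f \<in> B" "f x \<noteq> 0" then show "T f (u x) \<noteq> 0" using hu by blast
  qed
  have zs: "u ` zero_set f = zero_set (T f)" if f: "f \<in> B" for f
  proof
    show "u ` zero_set f \<subseteq> zero_set (T f)" using nz[OF f] by (auto simp: zero_set_def)
    show "zero_set (T f) \<subseteq> u ` zero_set f"
    proof
      fix y assume "y \<in> zero_set (T f)"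
      then have "T f (u (v y)) = 0" using uv by (simp add: zero_set_def)
      then have "v y \<in> zero_set f" using nz[OF f] by (simp add: zero_set_def)
      then show "y \<in> u ` zero_set f" using uv by (metis imageI)
    qed
  qed
  have cu: "continuous_on UNIV u"
    unfolding continuous_on_open_vimage[OF open_UNIV]
  proof (intro allI impI)
    fix W :: "'a set" assume W: "open W"
    have "open (u -` W)"
    proof (subst open_subopen, intro ballI)
      fix x assume "x \<in> u -` W"
      then obtain b N where b: "b \<in> C" "open N" "u x \<in> N" "\<forall>z\<in>N. b z = 1" "supp b \<subseteq> W"
        using a.BL[OF W] by blast
      have bB: "b \<in> B" using b(1) a.C_B by blast
      define f where "f = ?S b"
      have fB: "f \<in> B" using SB[OF bB] f_def by simp
      have Tf: "T f = b" using TS[OF bB] f_def by simp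
      have "b (u x) = 1" using b(3,4) by blast
      then have "f x \<noteq> 0" using nz[OF fB, of x] Tf by simp
      moreover have "{z. f z \<noteq> 0} \<subseteq> u -` W"
      proof
        fix z assume "z \<in> {z. f z \<noteq> 0}"
        then have "b (u z) \<noteq> 0" using nz[OF fB] Tf by simp
        then show "z \<in> u -` W" using b(5) a.coz_supp[of b] by blast
      qed
      ultimately show "\<exists>T. open T \<and> x \<in> T \<and> T \<subseteq> u -` W" using a.open_coz[OF fB] by blast
    qed
    then show "open (u -` W \<inter> UNIV)" by simp
  qed
  have cv: "continuous_on UNIV v"
    unfolding continuous_on_open_vimage[OF open_UNIV]
  proof (intro allI impI)
    fix W :: "'a set" assume W: "open W"
    have "open (v -` W)"
    proof (subst open_subopen, intro ballI)
      fix y assume "y \<in> v -` W"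
      then obtain b N where b: "b \<in> C" "open N" "v y \<in> N" "\<forall>z\<in>N. b z = 1" "supp b \<subseteq> W"
        using a.BL[OF W] by blast
      have bB: "b \<in> B" using b(1) a.C_B by blast
      define f where "f = T b"
      have fB: "f \<in> B" using a.TB[OF bB] f_def by simp
      have "f y \<noteq> 0" using nz[OF bB, of "v y"] uv b(3,4) f_def by simp
      moreover have "{z. f z \<noteq> 0} \<subseteq> v -` W"
      proof
        fix z assume "z \<in> {z. f z \<noteq> 0}"
        then have "T b (u (v z)) \<noteq> 0" using uv f_def by simp
        then have "b (v z) \<noteq> 0" using nz[OF bB] by blast
        then show "z \<in> v -` W" using b(5) a.coz_supp[of b] by blast
      qed
      ultimately show "\<exists>T. open T \<and> y \<in> T \<and> T \<subseteq> v -` W" using a.open_coz[OF fB] by blast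
    qed
    then show "open (v -` W \<inter> UNIV)" by simp
  qed
  have "homeomorphism UNIV UNIV u v"
    by (rule homeomorphismI[OF cu cv]) (auto simp: uv vu)
  then show ?thesis using zs by blast
qed




lemma Ck_smooth: "(\<And>n. Cn_on n g U) \<Longrightarrow> Ck_on k g U"
  by (simp add: Ck_on_def)

lemma Ck_cont: "Ck_on k g U \<Longrightarrow> continuous_on U g"
  unfolding Ck_on_def using Cn_on.simps(1) zero_enat_def zero_le by metis

lemma Ck_const: "Ck_on k (\<lambda>x. c) U"
  by (simp add: Ck_on_def Cn_const)

lemma Ck_mult: "Ck_on k a U \<Longrightarrow> Ck_on k b U \<Longrightarrow> Ck_on k (\<lambda>x. a x * b x :: 'f::real_normed_algebra) U"
  by (simp add: Ck_on_def Cn_mult)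

lemma Ck_subset: "V \<subseteq> U \<Longrightarrow> Ck_on k f U \<Longrightarrow> Ck_on k f V"
  unfolding Ck_on_def using Cn_subset by blast

lemma Ck_cong: "open U \<Longrightarrow> (\<And>x. x \<in> U \<Longrightarrow> f x = g x) \<Longrightarrow> Ck_on k f U \<Longrightarrow> Ck_on k g U"
  unfolding Ck_on_def using Cn_cong by blast

lemma Ck_local:
  assumes "open U" "\<And>x. x \<in> U \<Longrightarrow> \<exists>V. open V \<and> x \<in> V \<and> V \<subseteq> U \<and> Ck_on k f V"
  shows "Ck_on k f U"
  unfolding Ck_on_def
proof (intro allI impI)
  fix n assume n: "enat n \<le> k"
  show "Cn_on n f U"
  proof (rule Cn_local[OF assms(1)])
    fix x assume "x \<in> U"
    then obtain V where "open V" "x \<in> V" "V \<subseteq> U" "Ck_on k f V" using assms(2) by blast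
    then show "\<exists>V. open V \<and> x \<in> V \<and> V \<subseteq> U \<and> Cn_on n f V" using n unfolding Ck_on_def by blast
  qed
qed

lemma Ck_chain:
  fixes h :: "'e::euclidean_space \<Rightarrow> 'e2::euclidean_space" and g :: "'e2 \<Rightarrow> 'f::real_normed_vector"
  shows "(\<And>n. Cn_on n g V) \<Longrightarrow> Ck_on k h U \<Longrightarrow> h ` U \<subseteq> V \<Longrightarrow> Ck_on k (\<lambda>x. g (h x)) U"
  unfolding Ck_on_def using Cn_chain by blast

lemma Ck_inverse_comp:
  fixes f :: "'e::euclidean_space \<Rightarrow> 'f::{real_normed_div_algebra,euclidean_space}"
  shows "Ck_on k f U \<Longrightarrow> (\<And>x. x \<in> U \<Longrightarrow> f x \<noteq> 0) \<Longrightarrow> Ck_on k (\<lambda>x. inverse (f x)) U"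
  unfolding Ck_on_def using Cn_inverse_comp by blast

section \<open>Charts\<close>

lemma chart:
  assumes "Ck_atlas k A" "(U, \<phi>) \<in> A"
  shows "open U" "open (\<phi> ` U)" "continuous_on U \<phi>" "continuous_on (\<phi> ` U) (inv_into U \<phi>)"
    "\<And>z. z \<in> U \<Longrightarrow> inv_into U \<phi> (\<phi> z) = z"
    "\<And>p. p \<in> \<phi> ` U \<Longrightarrow> inv_into U \<phi> p \<in> U \<and> \<phi> (inv_into U \<phi> p) = p"
proof -
  have h: "open U" "open (\<phi> ` U)" "homeomorphism U (\<phi> ` U) \<phi> (inv_into U \<phi>)"
    using assms unfolding Ck_atlas_def by auto
  then show "open U" "open (\<phi> ` U)" "continuous_on U \<phi>" "continuous_on (\<phi> ` U) (inv_into U \<phi>)"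
    "\<And>z. z \<in> U \<Longrightarrow> inv_into U \<phi> (\<phi> z) = z"
    "\<And>p. p \<in> \<phi> ` U \<Longrightarrow> inv_into U \<phi> p \<in> U \<and> \<phi> (inv_into U \<phi> p) = p"
    unfolding homeomorphism_def by auto
qed

lemma chart_open_img:
  assumes "Ck_atlas k A" "(U, \<phi>) \<in> A" "open X"
  shows "open (\<phi> ` (U \<inter> X))"
proof -
  note c = chart[OF assms(1,2)]
  have "open (inv_into U \<phi> -` X \<inter> \<phi> ` U)"
    using c(2,4) assms(3) continuous_on_open_vimage by blast
  moreover have "inv_into U \<phi> -` X \<inter> \<phi> ` U = \<phi> ` (U \<inter> X)"
  proof
    show "inv_into U \<phi> -` X \<inter> \<phi> ` U \<subseteq> \<phi> ` (U \<inter> X)"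
    proof
      fix p assume "p \<in> inv_into U \<phi> -` X \<inter> \<phi> ` U"
      then show "p \<in> \<phi> ` (U \<inter> X)" using c(6)[of p] by (metis IntD1 IntD2 IntI image_eqI vimageE)
    qed
    show "\<phi> ` (U \<inter> X) \<subseteq> inv_into U \<phi> -` X \<inter> \<phi> ` U" using c(5) by auto
  qed
  ultimately show ?thesis by simp
qed

lemma transition:
  assumes "Ck_atlas k A" "(U, \<phi>) \<in> A" "(V, \<psi>) \<in> A"
  shows "Ck_on k (\<psi> \<circ> inv_into U \<phi>) (\<phi> ` (U \<inter> V))"
  using assms unfolding Ck_atlas_def by blast

lemma cover:
  assumes "Ck_atlas k A"
  obtains U \<phi> where "(U, \<phi>) \<in> A" "x \<in> U"
proof -
  have "x \<in> \<Union>(fst ` A)" using assms unfolding Ck_atlas_def by auto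
  then show ?thesis using that by force
qed

lemma Ck_fun_cont:
  fixes f :: "'a::t2_space \<Rightarrow> 'f::real_normed_vector"
  assumes atlas: "Ck_atlas k A" and f: "Ck_fun k A f"
  shows "continuous_on UNIV f"
proof -
  have "isCont f x" for x
  proof -
    obtain U \<phi> where U: "(U, \<phi>) \<in> A" "x \<in> U" using cover[OF atlas] by blast
    note c = chart[OF atlas U(1)]
    have "continuous_on (\<phi> ` U) (f \<circ> inv_into U \<phi>)"
      using f U(1) Ck_cont unfolding Ck_fun_def by blast
    then have "continuous_on U (\<lambda>z. (f \<circ> inv_into U \<phi>) (\<phi> z))"
      using continuous_on_compose2[OF _ c(3)] by blast
    moreover have "\<And>z. z \<in> U \<Longrightarrow> (f \<circ> inv_into U \<phi>) (\<phi> z) = f z" using c(5) by simp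
    ultimately have "continuous_on U f" using continuous_on_cong by force
    then show ?thesis using continuous_on_eq_continuous_at[OF c(1)] U(2) by blast
  qed
  then show ?thesis by (simp add: continuous_at_imp_continuous_on)
qed

lemma Ck_fun_local:
  assumes atlas: "Ck_atlas k A"
    and loc: "\<And>V \<psi> p. (V, \<psi>) \<in> A \<Longrightarrow> p \<in> \<psi> ` V \<Longrightarrow>
      \<exists>Q. open Q \<and> p \<in> Q \<and> Q \<subseteq> \<psi> ` V \<and> Ck_on k (\<lambda>q. e (inv_into V \<psi> q)) Q"
  shows "Ck_fun k A e"
  unfolding Ck_fun_def
proof (intro ballI, clarify)
  fix V \<psi> assume V: "(V, \<psi>) \<in> A"
  have "Ck_on k (\<lambda>q. e (inv_into V \<psi> q)) (\<psi> ` V)"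
    by (rule Ck_local[OF chart(2)[OF atlas V]]) (use loc[OF V] in blast)
  then show "Ck_on k (e \<circ> inv_into V \<psi>) (\<psi> ` V)" by (simp add: comp_def)
qed




lemma bump_exists:
  fixes A :: "('a::t2_space set \<times> ('a \<Rightarrow> 'e::euclidean_space)) set"
  assumes atlas: "Ck_atlas k A" and W: "open W" "x \<in> W"
  shows "\<exists>e::'a \<Rightarrow> 'f::real_normed_field. Ckc_fun k A e \<and>
     (\<exists>N. open N \<and> x \<in> N \<and> (\<forall>z\<in>N. e z = 1) \<and> closure {z. e z \<noteq> 0} \<subseteq> W)"
proof -
  obtain U \<phi> where U: "(U, \<phi>) \<in> A" "x \<in> U" using cover[OF atlas] by blast
  note c = chart[OF atlas U(1)]
  let ?\<iota> = "inv_into U \<phi>"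
  have oO: "open (\<phi> ` (U \<inter> W))" by (rule chart_open_img[OF atlas U(1) W(1)])
  have cO: "\<phi> x \<in> \<phi> ` (U \<inter> W)" using U W by auto
  obtain r where r: "r > 0" "cball (\<phi> x) r \<subseteq> \<phi> ` (U \<inter> W)"
    using oO cO open_contains_cball by blast
  define cc where "cc = \<phi> x"
  define \<beta> :: "'e \<Rightarrow> 'f" where "\<beta> = bump cc ((r/4)^2) ((r/2)^2)"
  have ab: "(r/4)^2 < (r/2)^2" using r(1) by (simp add: power_strict_mono)
  define e where "e z = (if z \<in> U then \<beta> (\<phi> z) else 0)" for z
  define K where "K = ?\<iota> ` cball cc (r/2)"
  have sub: "cball cc (r/2) \<subseteq> \<phi> ` (U \<inter> W)"
    using subset_cball[of "r/2" r cc] r unfolding cc_def by auto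
  have cptK: "compact K" unfolding K_def
    by (rule compact_continuous_image[OF continuous_on_subset[OF c(4)] compact_cball]) (use sub in auto)
  have KUW: "K \<subseteq> U \<inter> W"
  proof
    fix z assume "z \<in> K"
    then obtain p where p: "p \<in> cball cc (r/2)" "z = ?\<iota> p" unfolding K_def by blast
    then obtain w where "w \<in> U \<inter> W" "p = \<phi> w" using sub by blast
    then show "z \<in> U \<inter> W" using p(2) c(5) by auto
  qed
  have cozK: "{z. e z \<noteq> 0} \<subseteq> K"
  proof
    fix z assume "z \<in> {z. e z \<noteq> 0}"
    then have z: "z \<in> U" "\<beta> (\<phi> z) \<noteq> 0" unfolding e_def by (auto split: if_splits)
    have "(\<phi> z - cc) \<bullet> (\<phi> z - cc) < (r/2)^2"
      using z(2) bump0[OF ab, where c=cc and y="\<phi> z"] unfolding \<beta>_def by force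
    then have "norm (\<phi> z - cc) < r/2" using r(1) norm_lt_square[of "\<phi> z - cc" "r/2"] by linarith
    then have "\<phi> z \<in> cball cc (r/2)" by (simp add: dist_norm norm_minus_commute)
    then show "z \<in> K" unfolding K_def using c(5)[OF z(1)] by (metis image_eqI)
  qed
  have clK: "closure {z. e z \<noteq> 0} \<subseteq> K"
    by (rule closure_minimal[OF cozK compact_imp_closed[OF cptK]])
  have cpt: "compact (closure {z. e z \<noteq> 0})"
  proof -
    have "compact (K \<inter> closure {z. e z \<noteq> 0})" using cptK by blast
    moreover have "K \<inter> closure {z. e z \<noteq> 0} = closure {z. e z \<noteq> 0}" using clK by blast
    ultimately show ?thesis by simp
  qed
  define N where "N = \<phi> -` ball cc (r/4) \<inter> U"
  have oN: "open N" unfolding N_def using continuous_on_open_vimage[OF c(1)] c(3) by blast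
  have xN: "x \<in> N" unfolding N_def cc_def using U(2) r(1) by simp
  have e1: "\<forall>z\<in>N. e z = 1"
  proof
    fix z assume "z \<in> N"
    then have z: "z \<in> U" "dist cc (\<phi> z) < r/4" unfolding N_def by auto
    then have "norm (\<phi> z - cc) \<le> r/4" by (simp add: dist_norm norm_minus_commute)
    then have "(\<phi> z - cc) \<bullet> (\<phi> z - cc) \<le> (r/4)^2" using norm_le_square[of "\<phi> z - cc" "r/4"] by blast
    then show "e z = 1" unfolding e_def \<beta>_def using z(1) bump1[OF ab] by simp
  qed
  have Ck: "Ck_fun k A e"
  proof (rule Ck_fun_local[OF atlas])
    fix V \<psi> p assume V: "(V, \<psi>) \<in> A" and p: "p \<in> \<psi> ` V"
    note cV = chart[OF atlas V]
    let ?\<iota>' = "inv_into V \<psi>"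
    have q: "?\<iota>' p \<in> V" "\<psi> (?\<iota>' p) = p" using cV(6)[OF p] by auto
    show "\<exists>Q. open Q \<and> p \<in> Q \<and> Q \<subseteq> \<psi> ` V \<and> Ck_on k (\<lambda>q. e (?\<iota>' q)) Q"
    proof (cases "?\<iota>' p \<in> U")
      case True
      let ?Q = "\<psi> ` (V \<inter> U)"
      have oQ: "open ?Q" by (rule chart_open_img[OF atlas V c(1)])
      have pQ: "p \<in> ?Q" using q True by (metis IntI image_eqI)
      have tr: "Ck_on k (\<phi> \<circ> ?\<iota>') ?Q" by (rule transition[OF atlas V U(1)])
      have sm: "Cn_on n \<beta> UNIV" for n unfolding \<beta>_def by (rule Cn_bump)
      have "Ck_on k (\<lambda>q. \<beta> ((\<phi> \<circ> ?\<iota>') q)) ?Q"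
        by (rule Ck_chain[OF sm tr subset_UNIV])
      moreover have "\<beta> ((\<phi> \<circ> ?\<iota>') q) = e (?\<iota>' q)" if qQ: "q \<in> ?Q" for q
      proof -
        obtain w where "w \<in> V \<inter> U" "q = \<psi> w" using qQ by blast
        then have "?\<iota>' q \<in> U" using cV(5) by auto
        then show ?thesis by (simp add: e_def)
      qed
      ultimately have "Ck_on k (\<lambda>q. e (?\<iota>' q)) ?Q"
        by (rule Ck_cong[OF oQ, rotated])
      then show ?thesis using oQ pQ by blast
    next
      case False
      let ?Q = "\<psi> ` (V \<inter> - K)"
      have oQ: "open ?Q" by (rule chart_open_img[OF atlas V]) (use cptK compact_imp_closed in blast)
      have "?\<iota>' p \<notin> K" using False KUW by blast
      then have "?\<iota>' p \<in> V \<inter> - K" using q by simp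
      then have "\<psi> (?\<iota>' p) \<in> ?Q" by (rule imageI)
      then have pQ: "p \<in> ?Q" using q(2) by simp
      have "(\<lambda>q. 0) q = e (?\<iota>' q)" if qQ: "q \<in> ?Q" for q
      proof -
        obtain w where "w \<in> V \<inter> - K" "q = \<psi> w" using qQ by blast
        then have "?\<iota>' q \<notin> K" using cV(5) by auto
        then show ?thesis using cozK by auto
      qed
      then have "Ck_on k (\<lambda>q. e (?\<iota>' q)) ?Q"
        by (rule Ck_cong[OF oQ _ Ck_const])
      then show ?thesis using oQ pQ by blast
    qed
  qed
  have "closure {z. e z \<noteq> 0} \<subseteq> W" using clK KUW by blast
  then show ?thesis
    using Ck cpt oN xN e1 unfolding Ckc_fun_def by (intro exI[of _ e] conjI exI[of _ N]) auto
qed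


lemma Ck_fun_D:
  assumes "Ck_fun k A f" "(U, \<phi>) \<in> A"
  shows "Ck_on k (\<lambda>q. f (inv_into U \<phi> q)) (\<phi> ` U)"
proof -
  have "Ck_on k (f \<circ> inv_into U \<phi>) (\<phi> ` U)" using assms unfolding Ck_fun_def by fast
  then show ?thesis by (simp add: comp_def)
qed

lemma Ck_fun_I:
  assumes "\<And>U \<phi>. (U, \<phi>) \<in> A \<Longrightarrow> Ck_on k (\<lambda>q. f (inv_into U \<phi> q)) (\<phi> ` U)"
  shows "Ck_fun k A f"
  unfolding Ck_fun_def comp_def using assms by fast

lemma mult_Ckc:
  assumes f: "Ckc_fun k A f" and g: "Ckc_fun k A g"
  shows "Ckc_fun k A (\<lambda>x. f x * g x :: 'f::real_normed_field)"
proof -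
  have fC: "Ck_fun k A f" and gC: "Ck_fun k A g" and cf: "compact (closure {x. f x \<noteq> 0})"
    using f g unfolding Ckc_fun_def by auto
  have "Ck_fun k A (\<lambda>x. f x * g x)"
    by (rule Ck_fun_I, rule Ck_mult) (auto intro: Ck_fun_D[OF fC] Ck_fun_D[OF gC])
  moreover have "compact (closure {x. f x * g x \<noteq> 0})"
  proof -
    have s: "closure {x. f x * g x \<noteq> 0} \<subseteq> closure {x. f x \<noteq> 0}" by (rule closure_mono) auto
    from cf have "compact (closure {x. f x \<noteq> 0} \<inter> closure {x. f x * g x \<noteq> 0})"
      by (rule compact_Int_closed[OF _ closed_closure])
    then show ?thesis by (simp only: Int_absorb1[OF s])
  qed
  ultimately show ?thesis unfolding Ckc_fun_def by blast
qed

lemma div_Ckc: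
  fixes A :: "('a::t2_space set \<times> ('a \<Rightarrow> 'e::euclidean_space)) set"
    and f e :: "'a \<Rightarrow> 'f::{real_normed_field,euclidean_space}"
  assumes atlas: "Ck_atlas k A" and f: "Ck_fun k A f" and e: "Ckc_fun k A e"
    and sub: "closure {z. e z \<noteq> 0} \<subseteq> {z. f z \<noteq> 0}"
  shows "Ckc_fun k A (\<lambda>z. e z * inverse (f z))"
proof -
  have ocf: "open {z. f z \<noteq> 0}" using open_Collect_neq[OF Ck_fun_cont[OF atlas f] continuous_on_const] by blast
  have ccl: "closed (closure {z. e z \<noteq> 0})" by simp
  have Ck: "Ck_fun k A (\<lambda>z. e z * inverse (f z))"
  proof (rule Ck_fun_local[OF atlas])
    fix V \<psi> p assume V: "(V, \<psi>) \<in> A" and p: "p \<in> \<psi> ` V"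
    note cV = chart[OF atlas V]
    let ?\<iota>' = "inv_into V \<psi>"
    have q: "?\<iota>' p \<in> V" "\<psi> (?\<iota>' p) = p" using cV(6)[OF p] by auto
    have eV: "Ck_on k (\<lambda>q. e (?\<iota>' q)) (\<psi> ` V)" by (rule Ck_fun_D[OF _ V]) (use e in \<open>simp add: Ckc_fun_def\<close>)
    have fV: "Ck_on k (\<lambda>q. f (?\<iota>' q)) (\<psi> ` V)" by (rule Ck_fun_D[OF f V])
    show "\<exists>Q. open Q \<and> p \<in> Q \<and> Q \<subseteq> \<psi> ` V \<and> Ck_on k (\<lambda>q. e (?\<iota>' q) * inverse (f (?\<iota>' q))) Q"
    proof (cases "f (?\<iota>' p) \<noteq> 0")
      case True
      let ?Q = "\<psi> ` (V \<inter> {z. f z \<noteq> 0})"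
      have oQ: "open ?Q" by (rule chart_open_img[OF atlas V ocf])
      have "?\<iota>' p \<in> V \<inter> {z. f z \<noteq> 0}" using q True by simp
      then have "\<psi> (?\<iota>' p) \<in> ?Q" by (rule imageI)
      then have pQ: "p \<in> ?Q" using q(2) by simp
      have QV: "?Q \<subseteq> \<psi> ` V" by blast
      have nz: "f (?\<iota>' q) \<noteq> 0" if qQ: "q \<in> ?Q" for q
      proof -
        obtain w where "w \<in> V \<inter> {z. f z \<noteq> 0}" "q = \<psi> w" using qQ by blast
        then show ?thesis using cV(5) by auto
      qed
      have "Ck_on k (\<lambda>q. inverse (f (?\<iota>' q))) ?Q"
        by (rule Ck_inverse_comp[OF Ck_subset[OF QV fV] nz])
      then have "Ck_on k (\<lambda>q. e (?\<iota>' q) * inverse (f (?\<iota>' q))) ?Q"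
        by (rule Ck_mult[OF Ck_subset[OF QV eV]])
      then show ?thesis using oQ pQ QV by blast
    next
      case False
      let ?Q = "\<psi> ` (V \<inter> - closure {z. e z \<noteq> 0})"
      have oQ: "open ?Q" by (rule chart_open_img[OF atlas V]) (use ccl in blast)
      have "?\<iota>' p \<notin> closure {z. e z \<noteq> 0}" using False sub by blast
      then have "?\<iota>' p \<in> V \<inter> - closure {z. e z \<noteq> 0}" using q by simp
      then have "\<psi> (?\<iota>' p) \<in> ?Q" by (rule imageI)
      then have pQ: "p \<in> ?Q" using q(2) by simp
      have "(\<lambda>q. 0) q = e (?\<iota>' q) * inverse (f (?\<iota>' q))" if qQ: "q \<in> ?Q" for q
      proof -
        obtain w where "w \<in> V \<inter> - closure {z. e z \<noteq> 0}" "q = \<psi> w" using qQ by blast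
        then have "?\<iota>' q \<notin> closure {z. e z \<noteq> 0}" using cV(5) by auto
        then have "e (?\<iota>' q) = 0" using closure_subset[of "{z. e z \<noteq> 0}"] by blast
        then show ?thesis by simp
      qed
      then have "Ck_on k (\<lambda>q. e (?\<iota>' q) * inverse (f (?\<iota>' q))) ?Q"
        by (rule Ck_cong[OF oQ _ Ck_const])
      moreover have "?Q \<subseteq> \<psi> ` V" by blast
      ultimately show ?thesis using oQ pQ by blast
    qed
  qed
  have "compact (closure {z. e z * inverse (f z) \<noteq> 0})"
  proof -
    have s: "closure {z. e z * inverse (f z) \<noteq> 0} \<subseteq> closure {z. e z \<noteq> 0}" by (intro closure_mono) auto
    have "compact (closure {z. e z \<noteq> 0})" using e unfolding Ckc_fun_def by blast
    then have "compact (closure {z. e z \<noteq> 0} \<inter> closure {z. e z * inverse (f z) \<noteq> 0})"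
      by (rule compact_Int_closed[OF _ closed_closure])
    then show ?thesis by (simp only: Int_absorb1[OF s])
  qed
  then show ?thesis using Ck unfolding Ckc_fun_def by blast
qed

lemma zero_Ckc: "Ckc_fun k A (\<lambda>_. 0 :: 'f::real_normed_vector)"
  by (simp add: Ckc_fun_def Ck_fun_def comp_def Ck_const)

lemma BL_Ckc:
  fixes A :: "('a::t2_space set \<times> ('a \<Rightarrow> 'e::euclidean_space)) set"
  assumes atlas: "Ck_atlas k A"
  shows "open W \<Longrightarrow> x \<in> W \<Longrightarrow> \<exists>e\<in>{f::'a \<Rightarrow> 'f::real_normed_field. Ckc_fun k A f}. \<exists>N. open N \<and> x \<in> N \<and> (\<forall>z\<in>N. e z = 1) \<and> closure {z. e z \<noteq> 0} \<subseteq> W"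
  using bump_exists[OF atlas] by (metis mem_Collect_eq)

theorem proposition2p6:
  fixes k :: enat
    and A :: "('a::{t2_space, second_countable_topology} set \<times> ('a \<Rightarrow> 'e::euclidean_space)) set"
    and B :: "('a \<Rightarrow> 'f::{real_normed_field, euclidean_space}) set"
    and T :: "('a \<Rightarrow> 'f) \<Rightarrow> ('a \<Rightarrow> 'f)"
  assumes atlas: "Ck_atlas k A"
    and B_mult: "\<And>f g. f \<in> B \<Longrightarrow> g \<in> B \<Longrightarrow> (\<lambda>x. f x * g x) \<in> B"
    and B_lower: "{f. Ckc_fun k A f} \<subseteq> B"
    and B_upper: "B \<subseteq> {f. Ck_fun k A f}"
    and T_bij: "bij_betw T B B"
    and T_mult: "\<And>f g. f \<in> B \<Longrightarrow> g \<in> B \<Longrightarrow> T (\<lambda>x. f x * g x) = (\<lambda>x. T f x * T g x)"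
    and T_c: "bij_betw T {f. Ckc_fun k A f} {f. Ckc_fun k A f}"
  shows "\<exists>u v. homeomorphism UNIV UNIV u v \<and> (\<forall>f\<in>B. u ` zero_set f = zero_set (T f))"
proof -
  let ?C = "{f. Ckc_fun k A f}"
  have Cm: "(\<lambda>x. f x * g x) \<in> ?C" if fg: "f \<in> ?C" "g \<in> ?C" for f g :: "'a \<Rightarrow> 'f"
  proof -
    have "Ckc_fun k A f" "Ckc_fun k A g" using fg by auto
    then have "Ckc_fun k A (\<lambda>x. f x * g x)" by (rule mult_Ckc)
    then show ?thesis by simp
  qed
  have Cc: "\<And>f. f \<in> ?C \<Longrightarrow> compact (closure {z. f z \<noteq> 0})"
    by (simp add: Ckc_fun_def)
  have Bc: "\<And>f. f \<in> B \<Longrightarrow> continuous_on UNIV f"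
    using B_upper Ck_fun_cont[OF atlas] by blast
  have Dv: "\<And>f e. f \<in> B \<Longrightarrow> e \<in> ?C \<Longrightarrow> closure {z. e z \<noteq> 0} \<subseteq> {z. f z \<noteq> 0} \<Longrightarrow> (\<lambda>z. e z * inverse (f z)) \<in> ?C"
    using div_Ckc[OF atlas] B_upper by blast
  have z: "(\<lambda>_. 0) \<in> ?C" using zero_Ckc by blast
  have "absT B ?C T"
    by (rule absT.intro[OF B_lower z B_mult Cm Cc Bc BL_Ckc[OF atlas] Dv T_bij T_mult T_c])
  then show ?thesis by (rule abs_main)
qed


end
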